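(* Let $\mathcal{D}$ be any distribution over a domain $X$ and $c$ any concept, and let $\mathcal{D}_c$ be the distribution of $(\mathbf{x}, c(\mathbf{x}))$ where $\mathbf{x} \sim \mathcal{D}$. Suppose a sample $\mathbf{S}'_{\mathrm{big}}$ of $nk$ labeled points is generated by an $\eta$-rate nasty adversary with clean distribution $\mathcal{D}_c$: a clean sample $\mathbf{S}_{\mathrm{big}} \sim (\mathcal{D}_c)^{nk}$ is drawn, the adversary chooses a set $\mathbf{Z} \subseteq [nk]$ of indices (possibly depending on the clean sample) whose size $|\mathbf{Z}|$ has marginal distribution $\mathrm{Bin}(nk,\eta)$, and replaces the examples at indices in $\mathbf{Z}$ by arbitrary labeled examples. The sample $\mathbf{S}'_{\mathrm{big}}$ is then split into $k$ groups $(\mathbf{S}^{(1)})', \ldots, (\mathbf{S}^{(k)})'$ by drawing a uniform random permutation $\boldsymbol{\sigma}:[nk]\to[nk]$, forming $\boldsymbol{\sigma}(\mathbf{S}'_{\mathrm{big}})$ with $i$-th element $(\mathbf{S}'_{\mathrm{big}})_{\boldsymbol{\sigma}(i)}$, and letting $(\mathbf{S}^{(1)})'$ be its first $n$ elements, $(\mathbf{S}^{(2)})'$ the next $n$ elements, and so on. Then there exist random variables $\mathbf{S}^{(1)}, \ldots, \mathbf{S}^{(k)}$ and $\mathbf{z}_1, \ldots, \mathbf{z}_k$ (jointly defined with this process) with the following properties: 1. The marginal distribution of $\mathbf{S}^{(1)}, \ldots, \mathbf{S}^{(k)}$ is that of $k$ independent draws from $(\mathcal{D}_c)^n$. 2.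 The marginal distribution of $\mathbf{z}_1, \ldots, \mathbf{z}_k$ is that of $k$ independent draws from $\mathrm{Bin}(n, \eta)$. 3. With probability $1$, for all $i \in [k]$, the number of coordinates on which $\mathbf{S}^{(i)}$ and $(\mathbf{S}^{(i)})'$ differ is at most $\mathbf{z}_i$.
   Context: This concerns the success-probability amplification procedure for learners under nasty noise, which randomly permutes a corrupted size-$nk$ sample and splits it into $k$ groups of size $n$, running a base learner on each group. In the $\eta$-rate nasty noise model, a clean labeled sample is drawn i.i.d., then the adversary (seeing the whole clean sample) chooses a subset of indices to corrupt whose size is marginally $\mathrm{Bin}(\text{sample size},\eta)$, and replaces those examples arbitrarily. No assumption is made about the correlation between the $\mathbf{S}^{(i)}$ and the $\mathbf{z}_i$. *)

theory Defs
  imports "HOL-Probability.Probability"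
begin

definition labeled_space :: "'a measure \<Rightarrow> ('a \<times> bool) measure" where
  "labeled_space D = D \<Otimes>\<^sub>M (count_space UNIV :: bool measure)"

definition labeled_dist :: "'a measure \<Rightarrow> ('a \<Rightarrow> bool) \<Rightarrow> ('a \<times> bool) measure" where
  "labeled_dist D c = distr D (labeled_space D) (\<lambda>x. (x, c x))"

definition sample_space :: "'a measure \<Rightarrow> nat \<Rightarrow> (nat \<Rightarrow> 'a \<times> bool) measure" where
  "sample_space D m = PiM {..<m} (\<lambda>_. labeled_space D)"

end

theory Submission
  imports Defs "HOL-Combinatorics.Permutations"
begin



lemma exists_perm_map:
  fixes A :: "'a set"
  assumes "finite A" "T \<subseteq> A" "T' \<subseteq> A" "card T = card T'"
  shows "\<exists>r. r permutes A \<and> r ` T' = T"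
proof -
  have fT: "finite T" "finite T'" using assms finite_subset by auto
  obtain f where f: "bij_betw f T' T" using finite_same_card_bij[of T' T] fT assms(4) by auto
  have "card (A - T') = card (A - T)" using assms fT by (simp add: card_Diff_subset)
  then obtain g where g: "bij_betw g (A - T') (A - T)"
    using finite_same_card_bij[of "A - T'" "A - T"] assms by auto
  define r where "r = (\<lambda>x. if x \<in> T' then f x else if x \<in> A then g x else x)"
  have "bij_betw r T' T" using f by (subst bij_betw_cong[of T' r f]) (simp_all add: r_def)
  moreover have "bij_betw r (A - T') (A - T)" using g by (subst bij_betw_cong[of "A - T'" r g]) (simp_all add: r_def)
  ultimately have "bij_betw r (T' \<union> (A - T')) (T \<union> (A - T))"
    by (intro bij_betw_combine) auto
  moreover have "T' \<union> (A - T') = A" "T \<union> (A - T) = A" using assms by auto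
  ultimately have "bij_betw r A A" by simp
  moreover have "\<And>x. x \<notin> A \<Longrightarrow> r x = x" using assms(3) unfolding r_def by auto
  ultimately have "r permutes A" by (rule bij_imp_permutes)
  moreover have "r ` T' = T" using \<open>bij_betw r T' T\<close> by (simp add: bij_betw_def)
  ultimately show ?thesis by blast
qed

definition preim :: "('a \<Rightarrow> 'a) \<Rightarrow> 'a set \<Rightarrow> 'a set \<Rightarrow> 'a set" where
  "preim p A z = {t\<in>A. p t \<in> z}"

lemma preim_card:
  assumes "p permutes A" "z \<subseteq> A" "finite A"
  shows "preim p A z \<subseteq> A" "card (preim p A z) = card z"
proof -
  show "preim p A z \<subseteq> A" by (auto simp: preim_def)
  have "bij_betw p A A" using assms(1) by (rule permutes_imp_bij)
  moreover have img: "p ` (preim p A z) = z"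
  proof
    show "p ` preim p A z \<subseteq> z" by (auto simp: preim_def)
    show "z \<subseteq> p ` preim p A z"
    proof
      fix x assume x: "x \<in> z"
      then have "x \<in> p ` A" using assms(2) \<open>bij_betw p A A\<close> by (auto simp: bij_betw_def)
      then obtain t where "t \<in> A" "x = p t" by auto
      then show "x \<in> p ` preim p A z" using x by (auto simp: preim_def)
    qed
  qed
  ultimately have "bij_betw p (preim p A z) z"
    using bij_betw_subset[OF \<open>bij_betw p A A\<close> _ img] by (auto simp: preim_def)
  then show "card (preim p A z) = card z" by (rule bij_betw_same_card)
qed

lemma count_le:
  fixes A :: "'a set"
  assumes A: "finite A" and z: "z \<subseteq> A" and T: "T \<subseteq> A" "card T = card z"
    and T': "T' \<subseteq> A" "card T' = card z"
  shows "card {p. p permutes A \<and> preim p A z = T} \<le> card {p. p permutes A \<and> preim p A z = T'}"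
proof -
  obtain r where r: "r permutes A" "r ` T' = T" using exists_perm_map[of A T T'] A T T' by auto
  have inj: "inj_on (\<lambda>p. p \<circ> r) {p. p permutes A \<and> preim p A z = T}"
  proof (rule inj_onI)
    fix p q assume "p \<circ> r = q \<circ> r"
    then have "p \<circ> (r \<circ> inv r) = q \<circ> (r \<circ> inv r)" by (simp add: o_assoc)
    then show "p = q" using permutes_inv_o(1)[OF r(1)] by simp
  qed
  have "(\<lambda>p. p \<circ> r) ` {p. p permutes A \<and> preim p A z = T} \<subseteq> {p. p permutes A \<and> preim p A z = T'}"
  proof (rule subsetI)
    fix p' assume "p' \<in> (\<lambda>p. p \<circ> r) ` {p. p permutes A \<and> preim p A z = T}"
    then obtain p where p: "p permutes A" "preim p A z = T" and p': "p' = p \<circ> r" by auto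
    have pr: "p \<circ> r permutes A" using permutes_compose[OF r(1) p(1)] .
    have rA: "\<And>t. t \<in> A \<Longrightarrow> r t \<in> A" using r(1) by (simp add: permutes_in_image)
    have injr: "inj_on r A" using r(1) by (meson permutes_inj_on)
    have "preim (p \<circ> r) A z = T'"
    proof -
      have "preim (p \<circ> r) A z = {t\<in>A. r t \<in> T}"
        using p rA by (auto simp: preim_def)
      also have "\<dots> = T'"
      proof safe
        fix t assume t: "t \<in> A" "r t \<in> T"
        then obtain u where u: "u \<in> T'" "r t = r u" using r(2) by auto
        then show "t \<in> T'" using injr t T'(1) by (metis inj_onD subsetD)
      next
        fix t assume "t \<in> T'" then show "t \<in> A" using T' by auto
      next
        fix t assume "t \<in> T'" then show "r t \<in> T" using r(2) by auto
      qed
      finally show ?thesis .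
    qed
    then show "p' \<in> {p. p permutes A \<and> preim p A z = T'}" using pr p' by simp
  qed
  moreover have "finite {p. p permutes A \<and> preim p A z = T'}"
    using finite_permutations[OF A] by (rule rev_finite_subset) auto
  ultimately show ?thesis using inj by (meson card_inj_on_le)
qed

lemma perm_sum:
  fixes A :: "'a set" and f :: "'a set \<Rightarrow> real"
  assumes A: "finite A" and z: "z \<subseteq> A"
  shows "(\<Sum>p\<in>{p. p permutes A}. f (preim p A z)) * real (card A choose card z)
       = fact (card A) * (\<Sum>T\<in>{T. T \<subseteq> A \<and> card T = card z}. f T)"
proof -
  define Ts where "Ts = {T. T \<subseteq> A \<and> card T = card z}"
  define Ps where "Ps = {p. p permutes A}"
  define c where "c T = card {p\<in>Ps. preim p A z = T}" for T
  have fin: "finite Ps" "finite Ts" using A finite_permutations by (auto simp: Ps_def Ts_def)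
  have img: "(\<lambda>p. preim p A z) ` Ps \<subseteq> Ts" using preim_card[OF _ z A] by (auto simp: Ps_def Ts_def)
  have cc: "c T = c z" if "T \<in> Ts" for T
    using count_le[OF A z, of T z] count_le[OF A z, of z T] that z
    by (auto simp: c_def Ps_def Ts_def)
  have "(\<Sum>p\<in>Ps. f (preim p A z)) = (\<Sum>T\<in>Ts. \<Sum>p\<in>{p\<in>Ps. preim p A z = T}. f (preim p A z))"
    using sum.group[OF fin img, symmetric] .
  also have "\<dots> = (\<Sum>T\<in>Ts. real (c T) * f T)" by (auto simp: c_def intro!: sum.cong)
  also have "\<dots> = real (c z) * (\<Sum>T\<in>Ts. f T)" using cc by (simp add: sum_distrib_left)
  finally have 1: "(\<Sum>p\<in>Ps. f (preim p A z)) = real (c z) * (\<Sum>T\<in>Ts. f T)" .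
  have "card Ps = (\<Sum>T\<in>Ts. \<Sum>p\<in>{p\<in>Ps. preim p A z = T}. (1::nat))"
    using sum.group[OF fin img, of "\<lambda>_. 1::nat"] by simp
  also have "\<dots> = (\<Sum>T\<in>Ts. c z)" using cc by (auto simp: c_def intro!: sum.cong)
  also have "\<dots> = card Ts * c z" by simp
  finally have 2: "card Ps = card Ts * c z" .
  have 3: "card Ts = card A choose card z" unfolding Ts_def by (rule n_subsets[OF A])
  have 4: "card Ps = fact (card A)" unfolding Ps_def by (rule card_permutations) (use A in auto)
  show ?thesis
  proof -
    have "(\<Sum>p\<in>Ps. f (preim p A z)) * real (card A choose card z) = real (c z) * real (card Ts) * (\<Sum>T\<in>Ts. f T)"
      using 1 3 by simp
    also have "real (c z) * real (card Ts) = fact (card A)"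
      using 2 4 by (metis mult.commute of_nat_fact of_nat_mult)
    finally show ?thesis unfolding Ps_def Ts_def .
  qed
qed



lemma idx_lt:
  fixes i j n k :: nat
  assumes "i < k" "j < n" shows "i * n + j < n * k"
proof -
  have "i * n + j < i * n + n" using assms by simp
  also have "\<dots> = Suc i * n" by simp
  also have "\<dots> \<le> k * n" using assms(1) by (intro mult_le_mono1) simp
  finally show ?thesis by (simp add: mult.commute)
qed

lemma sum_Pow_Un:
  fixes f :: "'a set \<Rightarrow> real"
  assumes "finite X" "finite Y" "X \<inter> Y = {}"
  shows "(\<Sum>T\<in>Pow (X \<union> Y). f T) = (\<Sum>T1\<in>Pow X. \<Sum>T2\<in>Pow Y. f (T1 \<union> T2))"
proof -
  have inj: "inj_on (\<lambda>(a, b). a \<union> b) (Pow X \<times> Pow Y)"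
  proof (rule inj_onI, clarify)
    fix a b c d assume *: "a \<subseteq> X" "b \<subseteq> Y" "c \<subseteq> X" "d \<subseteq> Y" "a \<union> b = c \<union> d"
    have "a = (a \<union> b) \<inter> X" "c = (c \<union> d) \<inter> X" "b = (a \<union> b) \<inter> Y" "d = (c \<union> d) \<inter> Y"
      using * assms(3) by auto
    then show "a = c \<and> b = d" using *(5) by metis
  qed
  have img: "(\<lambda>(a, b). a \<union> b) ` (Pow X \<times> Pow Y) = Pow (X \<union> Y)"
  proof
    show "(\<lambda>(a, b). a \<union> b) ` (Pow X \<times> Pow Y) \<subseteq> Pow (X \<union> Y)" by auto
    show "Pow (X \<union> Y) \<subseteq> (\<lambda>(a, b). a \<union> b) ` (Pow X \<times> Pow Y)"
    proof
      fix T assume "T \<in> Pow (X \<union> Y)"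
      then have "T = (\<lambda>(a, b). a \<union> b) (T \<inter> X, T \<inter> Y)" "(T \<inter> X, T \<inter> Y) \<in> Pow X \<times> Pow Y" by auto
      then show "T \<in> (\<lambda>(a, b). a \<union> b) ` (Pow X \<times> Pow Y)" by (metis image_eqI)
    qed
  qed
  have "(\<Sum>T\<in>Pow (X \<union> Y). f T) = (\<Sum>z\<in>Pow X \<times> Pow Y. f ((\<lambda>(a, b). a \<union> b) z))"
    using sum.reindex[OF inj, of f] img by simp
  also have "\<dots> = (\<Sum>T1\<in>Pow X. \<Sum>T2\<in>Pow Y. f (T1 \<union> T2))"
    by (subst sum.cartesian_product) (simp add: case_prod_beta)
  finally show ?thesis .
qed

lemma sum_Pow_card:
  fixes g :: "nat \<Rightarrow> real"
  assumes "finite Y"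
  shows "(\<Sum>T\<in>Pow Y. g (card T)) = (\<Sum>m\<le>card Y. real (card Y choose m) * g m)"
proof -
  have fin: "finite (Pow Y)" "finite {..card Y}" using assms by auto
  have img: "card ` Pow Y \<subseteq> {..card Y}" using assms by (auto intro: card_mono)
  have "(\<Sum>T\<in>Pow Y. g (card T)) = (\<Sum>m\<le>card Y. \<Sum>T\<in>{T\<in>Pow Y. card T = m}. g (card T))"
    using sum.group[OF fin img, of "\<lambda>T. g (card T)"] by simp
  also have "\<dots> = (\<Sum>m\<le>card Y. real (card {T\<in>Pow Y. card T = m}) * g m)"
    by (intro sum.cong) auto
  also have "\<dots> = (\<Sum>m\<le>card Y. real (card Y choose m) * g m)"
  proof (intro sum.cong refl)
    fix m
    have "{T\<in>Pow Y. card T = m} = {T. T \<subseteq> Y \<and> card T = m}" by auto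
    then show "real (card {T\<in>Pow Y. card T = m}) * g m = real (card Y choose m) * g m"
      using n_subsets[OF assms, of m] by simp
  qed
  finally show ?thesis .
qed

lemma bin_measure:
  fixes \<eta> :: real
  assumes "0 \<le> \<eta>" "\<eta> \<le> 1"
  shows "measure (measure_pmf (binomial_pmf n \<eta>)) A
       = (\<Sum>m\<le>n. if m \<in> A then real (n choose m) * \<eta> ^ m * (1 - \<eta>) ^ (n - m) else 0)"
proof -
  have sub: "set_pmf (binomial_pmf n \<eta>) \<subseteq> {..n}"
    using assms by (auto simp: set_pmf_binomial_eq)
  have "measure (measure_pmf (binomial_pmf n \<eta>)) A = measure (measure_pmf (binomial_pmf n \<eta>)) (A \<inter> {..n})"
    using sub by (intro measure_pmf.finite_measure_eq_AE) (auto simp: AE_measure_pmf_iff)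
  also have "\<dots> = (\<Sum>m\<in>A \<inter> {..n}. pmf (binomial_pmf n \<eta>) m)"
    by (rule measure_measure_pmf_finite) simp
  also have "\<dots> = (\<Sum>m\<in>{..n} \<inter> A. real (n choose m) * \<eta> ^ m * (1 - \<eta>) ^ (n - m))"
    using assms by (simp add: Int_commute)
  also have "\<dots> = (\<Sum>m\<le>n. if m \<in> A then real (n choose m) * \<eta> ^ m * (1 - \<eta>) ^ (n - m) else 0)"
    by (subst sum.inter_restrict) auto
  finally show ?thesis .
qed

lemma block_sum:
  fixes \<eta> :: real and A :: "nat \<Rightarrow> nat set"
  assumes eta: "0 \<le> \<eta>" "\<eta> \<le> 1"
  shows "(\<Sum>T\<in>Pow {..<n*k}. if (\<forall>i<k. card {j. j < n \<and> i*n+j \<in> T} \<in> A i)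
            then \<eta> ^ card T * (1 - \<eta>) ^ (n*k - card T) else 0)
         = (\<Prod>i<k. measure (measure_pmf (binomial_pmf n \<eta>)) (A i))"
proof (induction k)
  case 0
  then show ?case by simp
next
  case (Suc k)
  define X where "X = {..<n*k}"
  define Y where "Y = {n*k..<n*k+n}"
  have XY: "{..<n * Suc k} = X \<union> Y" "X \<inter> Y = {}" "finite X" "finite Y"
    by (auto simp: X_def Y_def)
  define f1 where "f1 T1 = (if (\<forall>i<k. card {j. j < n \<and> i*n+j \<in> T1} \<in> A i)
            then \<eta> ^ card T1 * (1 - \<eta>) ^ (n*k - card T1) else 0)" for T1
  define f2 where "f2 m = (if m \<in> A k then \<eta> ^ m * (1 - \<eta>) ^ (n - m) else 0)" for m
  have split: "(if (\<forall>i<Suc k. card {j. j < n \<and> i*n+j \<in> T1 \<union> T2} \<in> A i)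
            then \<eta> ^ card (T1 \<union> T2) * (1 - \<eta>) ^ (n * Suc k - card (T1 \<union> T2)) else 0)
        = f1 T1 * f2 (card T2)" if T1: "T1 \<subseteq> X" and T2: "T2 \<subseteq> Y" for T1 T2
  proof -
    have fin: "finite T1" "finite T2" using T1 T2 XY finite_subset by auto
    have c1: "{j. j < n \<and> i*n+j \<in> T1 \<union> T2} = {j. j < n \<and> i*n+j \<in> T1}" if "i < k" for i
    proof -
      have "\<And>j. j < n \<Longrightarrow> i*n+j < n*k" using idx_lt that by blast
      then show ?thesis using T2 unfolding Y_def by (auto simp: subset_iff) (metis not_less)
    qed
    have c2: "card {j. j < n \<and> k*n+j \<in> T1 \<union> T2} = card T2"
    proof -
      have "{j. j < n \<and> k*n+j \<in> T1 \<union> T2} = {j. j < n \<and> k*n+j \<in> T2}"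
        using T1 by (auto simp: X_def)
      moreover have "T2 = (\<lambda>j. k*n+j) ` {j. j < n \<and> k*n+j \<in> T2}"
      proof
        show "T2 \<subseteq> (\<lambda>j. k*n+j) ` {j. j < n \<and> k*n+j \<in> T2}"
        proof
          fix t assume t: "t \<in> T2"
          then have "t \<in> {n*k..<n*k+n}" using T2 by (auto simp: Y_def)
          then have "t - k*n < n" "k*n \<le> t" by (auto simp: mult.commute)
          then show "t \<in> (\<lambda>j. k*n+j) ` {j. j < n \<and> k*n+j \<in> T2}"
            using t by (intro image_eqI[of _ _ "t - k*n"]) auto
        qed
      qed auto
      moreover have "inj_on (\<lambda>j. k*n+j) {j. j < n \<and> k*n+j \<in> T2}" by (auto simp: inj_on_def)
      ultimately show ?thesis by (metis card_image)
    qed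
    have cU: "card (T1 \<union> T2) = card T1 + card T2"
      using fin XY T1 T2 by (subst card_Un_disjoint) auto
    have b1: "card T1 \<le> n*k" using card_mono[OF XY(3) T1] by (simp add: X_def)
    have b2: "card T2 \<le> n" using card_mono[OF XY(4) T2] by (simp add: Y_def)
    have ex: "n * Suc k - (card T1 + card T2) = (n*k - card T1) + (n - card T2)"
      using b1 b2 by simp
    have cond: "(\<forall>i<Suc k. card {j. j < n \<and> i*n+j \<in> T1 \<union> T2} \<in> A i)
        \<longleftrightarrow> (\<forall>i<k. card {j. j < n \<and> i*n+j \<in> T1} \<in> A i) \<and> card T2 \<in> A k"
      using c1 c2 by (auto simp: less_Suc_eq)
    show ?thesis
      unfolding cond cU ex f1_def f2_def by (auto simp: power_add mult_ac)
  qed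
  have "(\<Sum>T\<in>Pow {..<n * Suc k}. if (\<forall>i<Suc k. card {j. j < n \<and> i*n+j \<in> T} \<in> A i)
            then \<eta> ^ card T * (1 - \<eta>) ^ (n * Suc k - card T) else 0)
      = (\<Sum>T1\<in>Pow X. \<Sum>T2\<in>Pow Y. f1 T1 * f2 (card T2))"
    unfolding XY(1)
  proof (subst sum_Pow_Un[OF XY(3,4,2)], intro sum.cong refl)
    fix T1 T2 assume "T1 \<in> Pow X" "T2 \<in> Pow Y"
    then show "(if (\<forall>i<Suc k. card {j. j < n \<and> i*n+j \<in> T1 \<union> T2} \<in> A i)
            then \<eta> ^ card (T1 \<union> T2) * (1 - \<eta>) ^ (n * Suc k - card (T1 \<union> T2)) else 0)
        = f1 T1 * f2 (card T2)" by (intro split) auto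
  qed
  also have "\<dots> = (\<Sum>T1\<in>Pow X. f1 T1) * (\<Sum>T2\<in>Pow Y. f2 (card T2))"
    by (simp add: sum_product)
  also have "(\<Sum>T1\<in>Pow X. f1 T1) = (\<Prod>i<k. measure (measure_pmf (binomial_pmf n \<eta>)) (A i))"
    using Suc.IH unfolding f1_def X_def .
  also have "(\<Sum>T2\<in>Pow Y. f2 (card T2)) = measure (measure_pmf (binomial_pmf n \<eta>)) (A k)"
    using sum_Pow_card[OF XY(4), of f2] bin_measure[OF eta, of n "A k"]
    by (simp add: Y_def f2_def if_distrib mult.assoc cong: if_cong)
  finally show ?case by (simp add: mult.commute)
qed



lemma measure_partition:
  assumes P: "finite_measure P" and F: "finite F" and X: "\<forall>\<omega>\<in>space P. X \<omega> \<in> F"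
    and Xm: "\<And>x. x \<in> F \<Longrightarrow> {\<omega>\<in>space P. X \<omega> = x} \<in> sets P"
  shows "measure P {\<omega>\<in>space P. Q (X \<omega>)} = (\<Sum>x\<in>F. if Q x then measure P {\<omega>\<in>space P. X \<omega> = x} else 0)"
proof -
  have "{\<omega>\<in>space P. Q (X \<omega>)} = (\<Union>x\<in>{x\<in>F. Q x}. {\<omega>\<in>space P. X \<omega> = x})" using X by auto
  then have "measure P {\<omega>\<in>space P. Q (X \<omega>)} = (\<Sum>x\<in>{x\<in>F. Q x}. measure P {\<omega>\<in>space P. X \<omega> = x})"
    using F Xm by (simp, intro measure_finite_Union)
      (auto simp: disjoint_family_on_def finite_measure.emeasure_finite[OF P])
  also have "\<dots> = (\<Sum>x\<in>F. if Q x then measure P {\<omega>\<in>space P. X \<omega> = x} else 0)"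
    using F by (simp add: sum.inter_filter)
  finally show ?thesis .
qed

lemma mix:
  fixes P :: "'w measure" and TS :: "'t measure" and trip :: "'w \<Rightarrow> 't" and \<sigma> :: "'w \<Rightarrow> 'p"
  assumes P: "prob_space P"
    and trip: "trip \<in> P \<rightarrow>\<^sub>M TS"
    and sig: "\<sigma> \<in> P \<rightarrow>\<^sub>M count_space UNIV"
    and indep: "distr P (TS \<Otimes>\<^sub>M count_space UNIV) (\<lambda>\<omega>. (trip \<omega>, \<sigma> \<omega>))
               = distr P TS trip \<Otimes>\<^sub>M distr P (count_space UNIV) \<sigma>"
    and unif: "distr P (count_space UNIV) \<sigma> = measure_pmf (pmf_of_set Ps)"
    and fin: "finite Ps" "Ps \<noteq> {}"
    and S: "S \<in> sets P"
    and B: "\<And>p. p \<in> Ps \<Longrightarrow> B p \<in> sets TS"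
    and SB: "\<And>\<omega> p. \<omega> \<in> space P \<Longrightarrow> p \<in> Ps \<Longrightarrow> \<sigma> \<omega> = p \<Longrightarrow> (\<omega> \<in> S \<longleftrightarrow> trip \<omega> \<in> B p)"
  shows "measure P S = (\<Sum>p\<in>Ps. measure P (trip -` B p \<inter> space P)) / card Ps"
proof -
  interpret prob_space P by fact
  have AEs: "AE \<omega> in P. \<sigma> \<omega> \<in> Ps"
  proof -
    have "AE x in distr P (count_space UNIV) \<sigma>. x \<in> Ps" unfolding unif using fin by (simp add: AE_measure_pmf_iff)
    then show ?thesis by (rule AE_distrD[OF sig])
  qed
  define E where "E p = \<sigma> -` {p} \<inter> space P" for p
  have E: "E p \<in> sets P" for p unfolding E_def by (rule measurable_sets[OF sig]) simp
  have "measure P S = measure P (\<Union>p\<in>Ps. S \<inter> E p)"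
  proof (rule finite_measure_eq_AE)
    show "(\<Union>p\<in>Ps. S \<inter> E p) \<in> sets P" using S E fin by (intro sets.finite_UN) auto
    show "AE x in P. (x \<in> S) = (x \<in> (\<Union>p\<in>Ps. S \<inter> E p))"
      using AEs by eventually_elim (use S in \<open>auto simp: E_def dest: sets.sets_into_space\<close>)
  qed fact
  also have "\<dots> = (\<Sum>p\<in>Ps. measure P (S \<inter> E p))"
    using S E fin by (intro measure_finite_Union) (auto simp: disjoint_family_on_def E_def)
  also have "\<dots> = (\<Sum>p\<in>Ps. measure P (trip -` B p \<inter> space P) / card Ps)"
  proof (intro sum.cong refl)
    fix p assume p: "p \<in> Ps"
    have pair: "(\<lambda>\<omega>. (trip \<omega>, \<sigma> \<omega>)) \<in> P \<rightarrow>\<^sub>M TS \<Otimes>\<^sub>M count_space UNIV"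
      using trip sig by (rule measurable_Pair)
    have BT: "B p \<times> {p} \<in> sets (TS \<Otimes>\<^sub>M count_space UNIV)" using B[OF p] by (intro pair_measureI) auto
    have "S \<inter> E p = (\<lambda>\<omega>. (trip \<omega>, \<sigma> \<omega>)) -` (B p \<times> {p}) \<inter> space P"
      using SB[OF _ p] S by (auto simp: E_def dest: sets.sets_into_space)
    then have "measure P (S \<inter> E p) = measure (distr P (TS \<Otimes>\<^sub>M count_space UNIV) (\<lambda>\<omega>. (trip \<omega>, \<sigma> \<omega>))) (B p \<times> {p})"
      using measure_distr[OF pair BT] by simp
    also have "\<dots> = measure (distr P TS trip \<Otimes>\<^sub>M measure_pmf (pmf_of_set Ps)) (B p \<times> {p})"
      unfolding indep unif ..
    also have "\<dots> = measure (distr P TS trip) (B p) * measure (measure_pmf (pmf_of_set Ps)) {p}"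
      using B[OF p] unfolding measure_def
      by (subst measure_pmf.emeasure_pair_measure_Times) (auto simp: enn2real_mult)
    also have "\<dots> = measure P (trip -` B p \<inter> space P) / card Ps"
      using measure_distr[OF trip B[OF p]] p fin by (simp add: measure_pmf_single)
    finally show "measure P (S \<inter> E p) = measure P (trip -` B p \<inter> space P) / card Ps" .
  qed
  also have "\<dots> = (\<Sum>p\<in>Ps. measure P (trip -` B p \<inter> space P)) / card Ps"
    by (simp add: sum_divide_distrib)
  finally show ?thesis .
qed

lemma prob_singleton_eq:
  assumes A: "prob_space A" and B: "prob_space B" and s: "sets A = sets B" and sp: "space A = {x}"
  shows "A = B"
proof (rule measure_eqI[OF s])
  fix X assume X: "X \<in> sets A"
  have spB: "space B = {x}" using sets_eq_imp_space_eq[OF s] sp by simp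
  from sets.sets_into_space[OF X] sp have "X = {} \<or> X = {x}" by auto
  then show "emeasure A X = emeasure B X"
    using prob_space.emeasure_space_1[OF A] prob_space.emeasure_space_1[OF B] sp spB by auto
qed

lemma block_distr:
  fixes M :: "'b measure" and n k :: nat
  assumes M: "prob_space M" and p: "p permutes {..<n*k}"
  shows "distr (PiM {..<n*k} (\<lambda>_. M)) (PiM {..<k} (\<lambda>_. PiM {..<n} (\<lambda>_. M)))
           (\<lambda>s. \<lambda>i\<in>{..<k}. \<lambda>j\<in>{..<n}. s (p (i*n+j)))
       = PiM {..<k} (\<lambda>_. PiM {..<n} (\<lambda>_. M))"
proof -
  let ?Q = "PiM {..<n*k} (\<lambda>_. M)"
  let ?T = "PiM {..<k} (\<lambda>_. PiM {..<n} (\<lambda>_. M))"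
  interpret Q: prob_space ?Q using M by (intro prob_space_PiM)
  have Tprob: "prob_space ?T" using M by (intro prob_space_PiM) auto
  have pin: "p (i*n+j) < n*k" if "i < k" "j < n" for i j
    using permutes_in_image[OF p] idx_lt[OF that] by simp
  have meas: "(\<lambda>s. \<lambda>i\<in>{..<k}. \<lambda>j\<in>{..<n}. s (p (i*n+j))) \<in> ?Q \<rightarrow>\<^sub>M ?T"
    using pin by (intro measurable_restrict measurable_component_singleton) auto
  show ?thesis
  proof (cases "n * k = 0")
    case True
    have "\<forall>f\<in>space ?T. \<forall>g\<in>space ?T. f = g"
    proof (intro ballI)
      fix f g assume f: "f \<in> space ?T" and g: "g \<in> space ?T"
      show "f = g"
      proof (rule ext)
      fix i
      show "f i = g i"
      proof (cases "i < k")
        case True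
        with \<open>n * k = 0\<close> have n: "n = 0" by auto
        have "f i \<in> space (PiM {..<n} (\<lambda>_. M))" "g i \<in> space (PiM {..<n} (\<lambda>_. M))"
          using f g True by (auto simp: space_PiM)
        then show ?thesis using n by (auto simp: space_PiM)
      next
        case False
        then show ?thesis using f g by (auto simp: space_PiM PiE_def extensional_def)
      qed
      qed
    qed
    moreover have "space ?T \<noteq> {}" using prob_space.not_empty[OF Tprob] .
    ultimately obtain x where x: "space ?T = {x}" by blast
    show ?thesis
      by (rule prob_singleton_eq[OF Q.prob_space_distr[OF meas] Tprob]) (use x in auto)
  next
    case False
    then have k0: "{..<k} \<noteq> {}" and N0: "{..<n*k} \<noteq> {}"
      by (auto simp: lessThan_empty_iff)
    have coords: "Q.indep_vars (\<lambda>_. M) (\<lambda>t x. x t) {..<n*k}"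
    proof (subst Q.indep_vars_iff_distr_eq_PiM'[OF N0])
      show "(\<lambda>x. x t) \<in> ?Q \<rightarrow>\<^sub>M M" if "t \<in> {..<n*k}" for t
        using that by (rule measurable_component_singleton)
      have "distr ?Q ?Q (\<lambda>x. \<lambda>t\<in>{..<n*k}. x t) = distr ?Q ?Q (\<lambda>x. x)"
        by (rule distr_cong) (auto simp: space_PiM PiE_def extensional_restrict)
      also have "\<dots> = ?Q" by simp
      also have "\<dots> = PiM {..<n*k} (\<lambda>t. distr ?Q M (\<lambda>x. x t))"
      proof (rule PiM_cong[OF refl])
        fix t assume "t \<in> {..<n*k}"
        then show "M = distr ?Q M (\<lambda>x. x t)"
          using distr_PiM_component[of "{..<n*k}" "\<lambda>_. M" t] M by simp
      qed
      finally show "distr ?Q ?Q (\<lambda>x. \<lambda>t\<in>{..<n*k}. x t) = PiM {..<n*k} (\<lambda>t. distr ?Q M (\<lambda>x. x t))" .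
    qed
    define K where "K i = (\<lambda>j. p (i*n+j)) ` {..<n}" for i
    have KI: "K i \<subseteq> {..<n*k}" if "i \<in> {..<k}" for i using pin that by (auto simp: K_def)
    have disj: "disjoint_family_on K {..<k}"
      unfolding disjoint_family_on_def
    proof (intro ballI impI equalityI subsetI)
      fix i i' t assume "i \<in> {..<k}" "i' \<in> {..<k}" "i \<noteq> i'" "t \<in> K i \<inter> K i'"
      then obtain j j' where *: "i < k" "i' < k" "i \<noteq> i'" "j < n" "j' < n" "p (i*n+j) = p (i'*n+j')"
        by (auto simp: K_def)
      then have "i*n+j = i'*n+j'" using permutes_inj[OF p] by (auto dest: injD)
      then have "(i*n+j) div n = (i'*n+j') div n" by simp
      then show "t \<in> {}" using * by simp
    qed simp
    have blocks: "Q.indep_vars (\<lambda>i. PiM (K i) (\<lambda>_. M)) (\<lambda>i \<omega>. restrict (\<lambda>t. \<omega> t) (K i)) {..<k}"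
      by (rule Q.indep_vars_restrict[OF coords KI disj])
    have Rm: "(\<lambda>u. \<lambda>j\<in>{..<n}. u (p (i*n+j))) \<in> PiM (K i) (\<lambda>_. M) \<rightarrow>\<^sub>M PiM {..<n} (\<lambda>_. M)" for i
      by (intro measurable_restrict measurable_component_singleton) (auto simp: K_def)
    have Y: "Q.indep_vars (\<lambda>_. PiM {..<n} (\<lambda>_. M)) (\<lambda>i x. \<lambda>j\<in>{..<n}. x (p (i*n+j))) {..<k}"
    proof -
      have eq: "(\<lambda>u. \<lambda>j\<in>{..<n}. u (p (i*n+j))) (restrict (\<lambda>t. x t) (K i))
                   = (\<lambda>j\<in>{..<n}. x (p (i*n+j)))" for i x
        by (auto simp: K_def restrict_def fun_eq_iff)
      have "Q.indep_vars (\<lambda>_. PiM {..<n} (\<lambda>_. M))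
              (\<lambda>i x. (\<lambda>u. \<lambda>j\<in>{..<n}. u (p (i*n+j))) (restrict (\<lambda>t. x t) (K i))) {..<k}"
        by (rule Q.indep_vars_compose2[OF blocks Rm])
      then show ?thesis unfolding eq .
    qed
    have "distr ?Q ?T (\<lambda>x. \<lambda>i\<in>{..<k}. \<lambda>j\<in>{..<n}. x (p (i*n+j)))
          = PiM {..<k} (\<lambda>i. distr ?Q (PiM {..<n} (\<lambda>_. M)) (\<lambda>x. \<lambda>j\<in>{..<n}. x (p (i*n+j))))"
    proof -
      have rv: "(\<lambda>x. \<lambda>j\<in>{..<n}. x (p (i*n+j))) \<in> ?Q \<rightarrow>\<^sub>M PiM {..<n} (\<lambda>_. M)" if "i \<in> {..<k}" for i
        using pin that by (intro measurable_restrict measurable_component_singleton) auto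
      show ?thesis
        using Q.indep_vars_iff_distr_eq_PiM'[OF k0 rv] Y by simp
    qed
    also have "\<dots> = ?T"
    proof (rule PiM_cong[OF refl])
      fix i assume i: "i \<in> {..<k}"
      have "distr ?Q (PiM {..<n} (\<lambda>j. (\<lambda>_. M) (p (i*n+j)))) (\<lambda>x. \<lambda>j\<in>{..<n}. x (p (i*n+j)))
            = PiM {..<n} (\<lambda>j. (\<lambda>_. M) (p (i*n+j)))"
      proof (rule distr_PiM_reindex)
        show "inj_on (\<lambda>j. p (i*n+j)) {..<n}"
          using permutes_inj[OF p] unfolding inj_on_def inj_def by fastforce
        show "(\<lambda>j. p (i*n+j)) \<in> {..<n} \<rightarrow> {..<n*k}" using pin i by auto
      qed (use M in auto)
      then show "distr ?Q (PiM {..<n} (\<lambda>_. M)) (\<lambda>x. \<lambda>j\<in>{..<n}. x (p (i*n+j))) = PiM {..<n} (\<lambda>_. M)"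
        by simp
    qed
    finally show ?thesis .
  qed
qed




lemma zs_comb:
  fixes PZ :: "nat set \<Rightarrow> real" and \<eta> :: real and A :: "nat \<Rightarrow> nat set" and n k :: nat
  assumes eta: "0 \<le> \<eta>" "\<eta> \<le> 1"
    and PC: "\<And>m. m \<le> n*k \<Longrightarrow> (\<Sum>z\<in>Pow {..<n*k}. if card z = m then PZ z else 0)
                = real (n*k choose m) * \<eta>^m * (1-\<eta>)^(n*k-m)"
  shows "(\<Sum>p\<in>{p. p permutes {..<n*k}}. \<Sum>z\<in>Pow {..<n*k}.
            if (\<forall>i<k. card {j. j < n \<and> i*n+j \<in> preim p {..<n*k} z} \<in> A i) then PZ z else 0)
          / real (card {p. p permutes {..<n*k}})
       = (\<Prod>i<k. measure (measure_pmf (binomial_pmf n \<eta>)) (A i))"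
proof -
  define N where "N = n * k"
  define A0 where "A0 = {..<N}"
  define Ps where "Ps = {p. p permutes A0}"
  define H where "H T = (\<forall>i<k. card {j. j < n \<and> i*n+j \<in> T} \<in> A i)" for T
  define f where "f T = (if H T then 1 else 0::real)" for T
  define w where "w m = \<eta>^m * (1-\<eta>)^(N-m)" for m
  define K where "K m = (\<Sum>T\<in>{T. T \<subseteq> A0 \<and> card T = m}. f T)" for m
  define \<phi> where "\<phi> m = fact N * K m / real (N choose m)" for m
  have finA0: "finite A0" "card A0 = N" by (auto simp: A0_def)
  have finPs: "finite Ps" using finite_permutations[OF finA0(1)] by (simp add: Ps_def)
  have cardPs: "card Ps = fact N" unfolding Ps_def using card_permutations[OF finA0(2) finA0(1)] .
  have s1: "(\<Sum>p\<in>Ps. \<Sum>z\<in>Pow A0. if H (preim p A0 z) then PZ z else 0)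
          = (\<Sum>z\<in>Pow A0. PZ z * (\<Sum>p\<in>Ps. f (preim p A0 z)))"
    by (subst sum.swap) (auto simp: sum_distrib_left f_def intro!: sum.cong)
  have s2: "(\<Sum>p\<in>Ps. f (preim p A0 z)) = \<phi> (card z)" if z: "z \<in> Pow A0" for z
  proof -
    have "card z \<le> N" using card_mono[OF finA0(1)] z finA0 by auto
    then have "real (N choose card z) \<noteq> 0" by simp
    moreover have "(\<Sum>p\<in>Ps. f (preim p A0 z)) * real (N choose card z) = fact N * K (card z)"
      using perm_sum[OF finA0(1), of z f] z finA0(2) by (simp add: Ps_def K_def)
    ultimately show ?thesis unfolding \<phi>_def by (simp add: field_simps)
  qed
  have img: "card ` Pow A0 \<subseteq> {..N}" using finA0 by (auto intro: card_mono)
  have "(\<Sum>z\<in>Pow A0. PZ z * (\<Sum>p\<in>Ps. f (preim p A0 z))) = (\<Sum>z\<in>Pow A0. PZ z * \<phi> (card z))"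
    using s2 by simp
  also have "\<dots> = (\<Sum>m\<le>N. \<Sum>z\<in>{z\<in>Pow A0. card z = m}. PZ z * \<phi> (card z))"
    using sum.group[OF _ _ img, of "\<lambda>z. PZ z * \<phi> (card z)"] finA0 by simp
  also have "\<dots> = (\<Sum>m\<le>N. \<phi> m * (\<Sum>z\<in>Pow A0. if card z = m then PZ z else 0))"
    by (intro sum.cong refl) (auto simp: sum_distrib_left sum.inter_filter[symmetric] finA0 mult.commute)
  also have "\<dots> = (\<Sum>m\<le>N. fact N * (K m * w m))"
  proof (intro sum.cong refl)
    fix m assume "m \<in> {..N}"
    then have "real (N choose m) \<noteq> 0" by simp
    then show "\<phi> m * (\<Sum>z\<in>Pow A0. if card z = m then PZ z else 0) = fact N * (K m * w m)"
      using PC[of m] \<open>m \<in> {..N}\<close> unfolding \<phi>_def w_def N_def[symmetric] A0_def[symmetric]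
      by (simp add: field_simps)
  qed
  also have "\<dots> = fact N * (\<Sum>m\<le>N. K m * w m)" by (simp add: sum_distrib_left)
  also have "(\<Sum>m\<le>N. K m * w m) = (\<Sum>T\<in>Pow A0. f T * w (card T))"
  proof -
    have "(\<Sum>T\<in>Pow A0. f T * w (card T)) = (\<Sum>m\<le>N. \<Sum>T\<in>{T\<in>Pow A0. card T = m}. f T * w (card T))"
      using sum.group[OF _ _ img, of "\<lambda>T. f T * w (card T)"] finA0 by simp
    also have "\<dots> = (\<Sum>m\<le>N. K m * w m)"
      by (intro sum.cong refl) (auto simp: K_def sum_distrib_right intro!: sum.cong)
    finally show ?thesis by simp
  qed
  also have "(\<Sum>T\<in>Pow A0. f T * w (card T))
      = (\<Sum>T\<in>Pow {..<n*k}. if (\<forall>i<k. card {j. j < n \<and> i*n+j \<in> T} \<in> A i)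
            then \<eta> ^ card T * (1 - \<eta>) ^ (n*k - card T) else 0)"
    by (intro sum.cong) (auto simp: A0_def N_def f_def H_def w_def)
  also have "\<dots> = (\<Prod>i<k. measure (measure_pmf (binomial_pmf n \<eta>)) (A i))"
    by (rule block_sum[OF eta])
  finally have main: "(\<Sum>p\<in>Ps. \<Sum>z\<in>Pow A0. if H (preim p A0 z) then PZ z else 0)
       = fact N * (\<Prod>i<k. measure (measure_pmf (binomial_pmf n \<eta>)) (A i))"
    using s1 by simp
  show ?thesis
    using main cardPs unfolding Ps_def A0_def N_def H_def by simp
qed



theorem proposition5p6:
  fixes P :: "'w measure" and D :: "'a measure" and c :: "'a \<Rightarrow> bool"
    and \<eta> :: real and n k :: nat
    and Sbig S' :: "'w \<Rightarrow> nat \<Rightarrow> 'a \<times> bool"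
    and Z :: "'w \<Rightarrow> nat set" and \<sigma> :: "'w \<Rightarrow> nat \<Rightarrow> nat"
  assumes P: "prob_space P"
    and D: "prob_space D"
    and c: "c \<in> D \<rightarrow>\<^sub>M count_space UNIV"
    and eta: "0 \<le> \<eta>" "\<eta> \<le> 1"
    and Sbig_meas: "Sbig \<in> P \<rightarrow>\<^sub>M sample_space D (n * k)"
    and Sbig_dist: "distr P (sample_space D (n * k)) Sbig
                    = PiM {..<n * k} (\<lambda>_. labeled_dist D c)"
    and Z_meas: "Z \<in> P \<rightarrow>\<^sub>M count_space (Pow {..<n * k})"
    and Z_card: "distr P (count_space UNIV) (\<lambda>\<omega>. card (Z \<omega>))
                 = measure_pmf (binomial_pmf (n * k) \<eta>)"
    and S'_meas: "S' \<in> P \<rightarrow>\<^sub>M sample_space D (n * k)"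
    and S'_corrupt: "\<forall>\<omega>\<in>space P. \<forall>i<n * k. i \<notin> Z \<omega> \<longrightarrow> S' \<omega> i = Sbig \<omega> i"
    and \<sigma>_meas: "\<sigma> \<in> P \<rightarrow>\<^sub>M count_space UNIV"
    and \<sigma>_unif: "distr P (count_space UNIV) \<sigma>
                  = measure_pmf (pmf_of_set {p. p permutes {..<n * k}})"
    and \<sigma>_indep: "distr P
        ((sample_space D (n * k) \<Otimes>\<^sub>M (count_space (Pow {..<n * k}) \<Otimes>\<^sub>M sample_space D (n * k)))
           \<Otimes>\<^sub>M count_space UNIV)
        (\<lambda>\<omega>. ((Sbig \<omega>, Z \<omega>, S' \<omega>), \<sigma> \<omega>))
      = distr P (sample_space D (n * k) \<Otimes>\<^sub>M (count_space (Pow {..<n * k}) \<Otimes>\<^sub>M sample_space D (n * k)))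
          (\<lambda>\<omega>. (Sbig \<omega>, Z \<omega>, S' \<omega>))
        \<Otimes>\<^sub>M distr P (count_space UNIV) \<sigma>"
  shows "\<exists>(Sg :: 'w \<Rightarrow> nat \<Rightarrow> nat \<Rightarrow> 'a \<times> bool) (zs :: 'w \<Rightarrow> nat \<Rightarrow> nat).
           Sg \<in> P \<rightarrow>\<^sub>M PiM {..<k} (\<lambda>_. sample_space D n)
         \<and> distr P (PiM {..<k} (\<lambda>_. sample_space D n)) Sg
             = PiM {..<k} (\<lambda>_. PiM {..<n} (\<lambda>_. labeled_dist D c))
         \<and> zs \<in> P \<rightarrow>\<^sub>M PiM {..<k} (\<lambda>_. count_space UNIV)
         \<and> distr P (PiM {..<k} (\<lambda>_. count_space UNIV)) zs
             = PiM {..<k} (\<lambda>_. measure_pmf (binomial_pmf n \<eta>))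
         \<and> (AE \<omega> in P. \<forall>i<k.
               card {j. j < n \<and> Sg \<omega> i j \<noteq> S' \<omega> (\<sigma> \<omega> (i * n + j))} \<le> zs \<omega> i)"
proof -
  interpret P: prob_space P by (rule P)
  define N where "N = n * k"
  define A0 where "A0 = {..<n * k}"
  define Ps where "Ps = {p. p permutes A0}"
  define LS where "LS = labeled_space D"
  define Dc where "Dc = labeled_dist D c"
  define SS where "SS = sample_space D (n * k)"
  define TS where "TS = SS \<Otimes>\<^sub>M (count_space (Pow A0) \<Otimes>\<^sub>M SS)"
  define trip where "trip = (\<lambda>\<omega>. (Sbig \<omega>, Z \<omega>, S' \<omega>))"
  define gp where "gp p = (\<lambda>s::nat \<Rightarrow> 'a \<times> bool. \<lambda>i\<in>{..<k}. \<lambda>j\<in>{..<n}. s (p (i*n+j)))" for p :: "nat \<Rightarrow> nat"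
  define Sg where "Sg = (\<lambda>\<omega>. \<lambda>i\<in>{..<k}. \<lambda>j\<in>{..<n}.
      Sbig \<omega> (if \<sigma> \<omega> (i*n+j) < n * k then \<sigma> \<omega> (i*n+j) else i*n+j))"
  define zs where "zs = (\<lambda>\<omega>. \<lambda>i\<in>{..<k}. card {j. j < n \<and> \<sigma> \<omega> (i*n+j) \<in> Z \<omega>})"
  have finA0: "finite A0" by (simp add: A0_def)
  have finPs: "finite Ps" "Ps \<noteq> {}"
  proof -
    have "id \<in> Ps" by (simp add: Ps_def permutes_id)
    then show "Ps \<noteq> {}" by auto
    show "finite Ps" using finite_permutations[OF finA0] by (simp add: Ps_def)
  qed
  have pin: "p (i*n+j) < n*k" if "p \<in> Ps" "i < k" "j < n" for p i j
    using permutes_in_image[of p A0] that idx_lt[OF that(2,3)] by (simp add: Ps_def A0_def)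
  have unif: "distr P (count_space UNIV) \<sigma> = measure_pmf (pmf_of_set Ps)"
    using \<sigma>_unif by (simp add: Ps_def A0_def)
  have AEs: "AE \<omega> in P. \<sigma> \<omega> \<in> Ps"
  proof -
    have "AE x in distr P (count_space UNIV) \<sigma>. x \<in> Ps" unfolding unif using finPs by (simp add: AE_measure_pmf_iff)
    then show ?thesis by (rule AE_distrD[OF \<sigma>_meas])
  qed
  have trip_meas: "trip \<in> P \<rightarrow>\<^sub>M TS"
    unfolding trip_def TS_def SS_def A0_def using Sbig_meas Z_meas S'_meas by measurable
  have indep: "distr P (TS \<Otimes>\<^sub>M count_space UNIV) (\<lambda>\<omega>. (trip \<omega>, \<sigma> \<omega>))
               = distr P TS trip \<Otimes>\<^sub>M distr P (count_space UNIV) \<sigma>"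
    using \<sigma>_indep by (simp add: trip_def TS_def SS_def A0_def)
  have Dc_prob: "prob_space Dc"
  proof -
    have "(\<lambda>x. (x, c x)) \<in> D \<rightarrow>\<^sub>M LS" unfolding LS_def labeled_space_def using c by measurable
    then show ?thesis unfolding Dc_def labeled_dist_def LS_def[symmetric]
      by (rule prob_space.prob_space_distr[OF D])
  qed
  have sets_Dc: "sets Dc = sets LS" by (simp add: Dc_def labeled_dist_def LS_def)
  have space_Dc: "space Dc = space LS" by (simp add: Dc_def labeled_dist_def LS_def)
  have Sg_meas: "Sg \<in> P \<rightarrow>\<^sub>M PiM {..<k} (\<lambda>_. sample_space D n)"
    unfolding sample_space_def Sg_def
  proof (intro measurable_restrict)
    fix i j assume i: "i \<in> {..<k}" and j: "j \<in> {..<n}"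
    have g: "(\<lambda>\<omega>. if \<sigma> \<omega> (i*n+j) < n * k then \<sigma> \<omega> (i*n+j) else i*n+j) \<in> P \<rightarrow>\<^sub>M count_space {..<n*k}"
    proof (rule measurable_compose[OF \<sigma>_meas])
      show "(\<lambda>q. if q (i*n+j) < n * k then q (i*n+j) else i*n+j) \<in> count_space UNIV \<rightarrow>\<^sub>M count_space {..<n*k}"
        using idx_lt[of i k j n] i j by (auto simp: measurable_count_space_eq1)
    qed
    have "(\<lambda>\<omega>. Sbig \<omega> t) \<in> P \<rightarrow>\<^sub>M labeled_space D" if "t \<in> {..<n*k}" for t
      using Sbig_meas that unfolding sample_space_def by measurable
    then show "(\<lambda>\<omega>. Sbig \<omega> (if \<sigma> \<omega> (i*n+j) < n * k then \<sigma> \<omega> (i*n+j) else i*n+j)) \<in> P \<rightarrow>\<^sub>M labeled_space D"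
      by (rule measurable_compose_countable'[OF _ g]) (simp_all add: countable_finite)
  qed
  let ?T = "PiM {..<k} (\<lambda>_. sample_space D n)"
  let ?Tc = "PiM {..<k} (\<lambda>_. PiM {..<n} (\<lambda>_. labeled_dist D c))"
  have sets_T: "sets ?T = sets ?Tc"
    unfolding sample_space_def
    by (intro sets_PiM_cong refl) (simp add: sets_Dc[unfolded Dc_def LS_def])
  have Tc_prob: "prob_space ?Tc" using Dc_prob unfolding Dc_def by (intro prob_space_PiM) auto
  interpret Tc: prob_space ?Tc by (rule Tc_prob)
  have gp_meas: "gp p \<in> SS \<rightarrow>\<^sub>M ?T" if "p \<in> Ps" for p
    unfolding gp_def SS_def sample_space_def
    using pin[OF that] by (intro measurable_restrict measurable_component_singleton) auto
  have Sg_dist: "distr P ?T Sg = ?Tc"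
  proof (rule measure_eqI)
    show "sets (distr P ?T Sg) = sets ?Tc" using sets_T by simp
    fix X assume "X \<in> sets (distr P ?T Sg)"
    then have X: "X \<in> sets ?T" by simp
    define S where "S = Sg -` X \<inter> space P"
    define B where "B p = (\<lambda>t. gp p (fst t)) -` X \<inter> space TS" for p
    have S: "S \<in> sets P" unfolding S_def using Sg_meas X by (rule measurable_sets)
    have B: "B p \<in> sets TS" if "p \<in> Ps" for p
      unfolding B_def TS_def using measurable_compose[OF measurable_fst gp_meas[OF that]] X
      by (rule measurable_sets)
    have SB: "\<omega> \<in> S \<longleftrightarrow> trip \<omega> \<in> B p" if "\<omega> \<in> space P" "p \<in> Ps" "\<sigma> \<omega> = p" for \<omega> p
    proof -
      have "Sg \<omega> = gp p (Sbig \<omega>)"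
        using pin[OF that(2)] that(3) by (auto simp: Sg_def gp_def fun_eq_iff)
      moreover have "trip \<omega> \<in> space TS" using measurable_space[OF trip_meas that(1)] .
      ultimately show ?thesis using that(1) by (simp add: S_def B_def trip_def)
    qed
    have each: "measure P (trip -` B p \<inter> space P) = measure ?Tc X" if p: "p \<in> Ps" for p
    proof -
      have pp: "p permutes {..<n*k}" using p by (simp add: Ps_def A0_def)
      have "trip -` B p \<inter> space P = Sbig -` (gp p -` X \<inter> space SS) \<inter> space P"
        using measurable_space[OF trip_meas] measurable_space[OF Sbig_meas]
        by (auto simp: B_def trip_def SS_def)
      then have "measure P (trip -` B p \<inter> space P) = measure (distr P SS Sbig) (gp p -` X \<inter> space SS)"
        using measure_distr[OF Sbig_meas[folded SS_def] measurable_sets[OF gp_meas[OF p] X]] by simp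
      also have "\<dots> = measure (PiM {..<n*k} (\<lambda>_. Dc)) (gp p -` X \<inter> space (PiM {..<n*k} (\<lambda>_. Dc)))"
      proof -
        have "space (PiM {..<n*k} (\<lambda>_. Dc)) = space SS"
          by (simp add: SS_def sample_space_def space_PiM space_Dc LS_def)
        then show ?thesis using Sbig_dist by (simp add: SS_def Dc_def)
      qed
      also have "\<dots> = measure (distr (PiM {..<n*k} (\<lambda>_. Dc)) ?Tc (gp p)) X"
      proof -
        have "gp p \<in> PiM {..<n*k} (\<lambda>_. Dc) \<rightarrow>\<^sub>M ?Tc"
          unfolding gp_def Dc_def
          using pin[OF p] by (intro measurable_restrict measurable_component_singleton) auto
        moreover have "X \<in> sets ?Tc" using X sets_T by simp
        ultimately show ?thesis by (simp add: measure_distr)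
      qed
      also have "distr (PiM {..<n*k} (\<lambda>_. Dc)) ?Tc (gp p) = ?Tc"
        using block_distr[OF Dc_prob pp] unfolding gp_def Dc_def .
      finally show ?thesis .
    qed
    have "measure P S = (\<Sum>p\<in>Ps. measure P (trip -` B p \<inter> space P)) / card Ps"
      by (rule mix[OF P trip_meas \<sigma>_meas indep unif finPs S B SB])
    also have "\<dots> = measure ?Tc X" using each finPs by simp
    finally have "measure P S = measure ?Tc X" .
    then show "emeasure (distr P ?T Sg) X = emeasure ?Tc X"
      using X Sg_meas
      by (simp add: emeasure_distr S_def P.emeasure_eq_measure Tc.emeasure_eq_measure)
  qed
  have zs_meas: "zs \<in> P \<rightarrow>\<^sub>M PiM {..<k} (\<lambda>_. count_space UNIV)"
    unfolding zs_def
  proof (intro measurable_restrict)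
    fix i assume "i \<in> {..<k}"
    have pairm: "(\<lambda>\<omega>. (Z \<omega>, \<sigma> \<omega>)) \<in> P \<rightarrow>\<^sub>M count_space (Pow A0) \<Otimes>\<^sub>M count_space UNIV"
      using Z_meas \<sigma>_meas unfolding A0_def by (rule measurable_Pair)
    have \<Phi>: "(\<lambda>(z, q). card {j. j < n \<and> q (i*n+j) \<in> z}) \<in> count_space (Pow A0) \<Otimes>\<^sub>M count_space UNIV \<rightarrow>\<^sub>M count_space UNIV"
      by (rule measurable_pair_measure_countable1) (simp_all add: countable_finite finA0)
    show "(\<lambda>\<omega>. card {j. j < n \<and> \<sigma> \<omega> (i*n+j) \<in> Z \<omega>}) \<in> P \<rightarrow>\<^sub>M count_space UNIV"
      using measurable_compose[OF pairm \<Phi>] unfolding prod.case .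
  qed
  have psf: "product_sigma_finite (\<lambda>_::nat. measure_pmf (binomial_pmf n \<eta>))"
    unfolding product_sigma_finite_def using prob_space_imp_sigma_finite[OF prob_space_measure_pmf] by blast
  define PZ where "PZ z = measure P {\<omega>\<in>space P. Z \<omega> = z}" for z
  have Zsp: "Z \<omega> \<in> Pow A0" if "\<omega> \<in> space P" for \<omega>
    using measurable_space[OF Z_meas that] by (simp add: A0_def)
  have Zsets: "{\<omega>\<in>space P. Z \<omega> = z} \<in> sets P" if "z \<in> Pow A0" for z
  proof -
    have "{\<omega>\<in>space P. Z \<omega> = z} = Z -` {z} \<inter> space P" by auto
    also have "\<dots> \<in> sets P" using that by (intro measurable_sets[OF Z_meas]) (auto simp: A0_def)
    finally show ?thesis .
  qed
  have PC: "(\<Sum>z\<in>Pow {..<n*k}. if card z = m then PZ z else 0)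
                = real (n*k choose m) * \<eta>^m * (1-\<eta>)^(n*k-m)" if "m \<le> n*k" for m
  proof -
    have "(\<Sum>z\<in>Pow {..<n*k}. if card z = m then PZ z else 0) = measure P {\<omega>\<in>space P. card (Z \<omega>) = m}"
      unfolding PZ_def A0_def[symmetric]
      by (rule measure_partition[symmetric]) (use finA0 Zsp Zsets P.finite_measure_axioms in auto)
    also have "\<dots> = measure (distr P (count_space UNIV) (\<lambda>\<omega>. card (Z \<omega>))) {m}"
    proof -
      have cm: "(\<lambda>\<omega>. card (Z \<omega>)) \<in> P \<rightarrow>\<^sub>M count_space UNIV"
        by (rule measurable_compose[OF Z_meas]) simp
      show ?thesis by (subst measure_distr[OF cm]) (auto intro!: arg_cong[where f="measure P"])
    qed
    also have "\<dots> = real (n*k choose m) * \<eta>^m * (1-\<eta>)^(n*k-m)"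
      unfolding Z_card using eta by (simp add: measure_pmf_single)
    finally show ?thesis .
  qed
  have zs_dist: "distr P (PiM {..<k} (\<lambda>_. count_space UNIV)) zs = PiM {..<k} (\<lambda>_. measure_pmf (binomial_pmf n \<eta>))"
  proof (rule product_sigma_finite.PiM_eqI[OF psf])
    show "finite {..<k}" by simp
    show "sets (distr P (PiM {..<k} (\<lambda>_. count_space UNIV)) zs) = sets (PiM {..<k} (\<lambda>_. measure_pmf (binomial_pmf n \<eta>)))"
      by simp (intro sets_PiM_cong, auto)
    fix A :: "nat \<Rightarrow> nat set"
    define S where "S = zs -` PiE {..<k} A \<inter> space P"
    define H where "H p z = (\<forall>i<k. card {j. j < n \<and> i*n+j \<in> preim p {..<n*k} z} \<in> A i)" for p z
    define B where "B p = (\<lambda>t. fst (snd t)) -` {z\<in>Pow A0. H p z} \<inter> space TS" for p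
    have PiEs: "PiE {..<k} A \<in> sets (PiM {..<k} (\<lambda>_. count_space UNIV))"
      by (rule sets_PiM_I_finite) auto
    have S: "S \<in> sets P" unfolding S_def using zs_meas PiEs by (rule measurable_sets)
    have B: "B p \<in> sets TS" for p
    proof -
      have "(\<lambda>t. fst (snd t)) \<in> TS \<rightarrow>\<^sub>M count_space (Pow A0)" unfolding TS_def by measurable
      then show ?thesis unfolding B_def by (rule measurable_sets) auto
    qed
    have Hiff: "H p z \<longleftrightarrow> (\<forall>i<k. card {j. j < n \<and> p (i*n+j) \<in> z} \<in> A i)" for p z
    proof -
      have "{j. j < n \<and> i*n+j \<in> preim p {..<n*k} z} = {j. j < n \<and> p (i*n+j) \<in> z}" if "i < k" for i
        using idx_lt[OF that] by (auto simp: preim_def)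
      then show ?thesis unfolding H_def by auto
    qed
    have SB: "\<omega> \<in> S \<longleftrightarrow> trip \<omega> \<in> B p" if "\<omega> \<in> space P" "p \<in> Ps" "\<sigma> \<omega> = p" for \<omega> p
    proof -
      have "trip \<omega> \<in> space TS" using measurable_space[OF trip_meas that(1)] .
      then have "trip \<omega> \<in> B p \<longleftrightarrow> H p (Z \<omega>)" using Zsp[OF that(1)] by (auto simp: B_def trip_def)
      moreover have "\<omega> \<in> S \<longleftrightarrow> (\<forall>i<k. card {j. j < n \<and> p (i*n+j) \<in> Z \<omega>} \<in> A i)"
        using that by (auto simp: S_def zs_def restrict_PiE_iff)
      ultimately show ?thesis using Hiff by simp
    qed
    have each: "measure P (trip -` B p \<inter> space P) = (\<Sum>z\<in>Pow A0. if H p z then PZ z else 0)" for p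
    proof -
      have "trip -` B p \<inter> space P = {\<omega>\<in>space P. H p (Z \<omega>)}"
        using measurable_space[OF trip_meas] Zsp by (auto simp: B_def trip_def)
      then show ?thesis unfolding PZ_def
        using measure_partition[of P "Pow A0" Z "H p"] finA0 Zsp Zsets P.finite_measure_axioms by auto
    qed
    have "measure P S = (\<Sum>p\<in>Ps. measure P (trip -` B p \<inter> space P)) / card Ps"
      by (rule mix[OF P trip_meas \<sigma>_meas indep unif finPs S B SB])
    also have "\<dots> = (\<Prod>i<k. measure (measure_pmf (binomial_pmf n \<eta>)) (A i))"
      unfolding each using zs_comb[OF eta PC, of A] by (simp add: Ps_def A0_def H_def)
    finally have mS: "measure P S = (\<Prod>i<k. measure (measure_pmf (binomial_pmf n \<eta>)) (A i))" .
    have "emeasure (distr P (PiM {..<k} (\<lambda>_. count_space UNIV)) zs) (PiE {..<k} A) = emeasure P S"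
      unfolding S_def by (rule emeasure_distr[OF zs_meas PiEs])
    also have "\<dots> = ennreal (\<Prod>i<k. measure (measure_pmf (binomial_pmf n \<eta>)) (A i))"
      using mS by (simp add: P.emeasure_eq_measure)
    also have "\<dots> = (\<Prod>i<k. emeasure (measure_pmf (binomial_pmf n \<eta>)) (A i))"
      by (simp add: prod_ennreal measure_pmf.emeasure_eq_measure)
    finally show "emeasure (distr P (PiM {..<k} (\<lambda>_. count_space UNIV)) zs) (PiE {..<k} A)
        = (\<Prod>i\<in>{..<k}. emeasure (measure_pmf (binomial_pmf n \<eta>)) (A i))" by simp
  qed
  have ae: "AE \<omega> in P. \<forall>i<k. card {j. j < n \<and> Sg \<omega> i j \<noteq> S' \<omega> (\<sigma> \<omega> (i * n + j))} \<le> zs \<omega> i"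
    using AEs AE_space[of P]
  proof eventually_elim
    case (elim \<omega>)
    show ?case
    proof (intro allI impI)
      fix i assume i: "i < k"
      have "{j. j < n \<and> Sg \<omega> i j \<noteq> S' \<omega> (\<sigma> \<omega> (i * n + j))} \<subseteq> {j. j < n \<and> \<sigma> \<omega> (i*n+j) \<in> Z \<omega>}"
      proof (rule subsetI, rule ccontr)
        fix j assume j: "j \<in> {j. j < n \<and> Sg \<omega> i j \<noteq> S' \<omega> (\<sigma> \<omega> (i * n + j))}"
          and nj: "j \<notin> {j. j < n \<and> \<sigma> \<omega> (i*n+j) \<in> Z \<omega>}"
        have lt: "\<sigma> \<omega> (i*n+j) < n*k" using pin[OF elim(1) i] j by simp
        then have "Sg \<omega> i j = Sbig \<omega> (\<sigma> \<omega> (i*n+j))" using i j by (simp add: Sg_def)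
        moreover have "S' \<omega> (\<sigma> \<omega> (i*n+j)) = Sbig \<omega> (\<sigma> \<omega> (i*n+j))"
          using S'_corrupt elim(2) lt nj j by auto
        ultimately show False using j by simp
      qed
      then have "card {j. j < n \<and> Sg \<omega> i j \<noteq> S' \<omega> (\<sigma> \<omega> (i * n + j))} \<le> card {j. j < n \<and> \<sigma> \<omega> (i*n+j) \<in> Z \<omega>}"
        by (rule card_mono[rotated]) simp
      then show "card {j. j < n \<and> Sg \<omega> i j \<noteq> S' \<omega> (\<sigma> \<omega> (i * n + j))} \<le> zs \<omega> i"
        using i by (simp add: zs_def)
    qed
  qed
  show ?thesis
    by (intro exI[of _ Sg] exI[of _ zs] conjI Sg_meas Sg_dist zs_meas zs_dist ae)
qed


end
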